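(* Let $\mathbf{A}\in\mathbb{R}^{m\times n}$, $b\in\mathcal{R}(\mathbf{A})$, and let $f:\mathbb{R}^n\to\mathbb{R}$ be finite everywhere and strongly convex. Let $\hat x$ be the unique solution of $\min_{x\in\mathbb{R}^n} f(x)$ subject to $\mathbf{A}x=b$, let $\Psi(y)=f^*(\mathbf{A}^\top y)-b^\top y$ for $y\in\mathbb{R}^m$, and let $\hat\Psi=\min_{y\in\mathbb{R}^m}\Psi(y)$. Let $(y^k)_k\subset\mathbb{R}^m$ be any sequence and define $d^k=\mathbf{A}^\top y^k$ and $x^k=\nabla f^*(d^k)$. Then for every $k$, $$D_f^{d^k}(x^k,\hat x)=\Psi(y^k)-\hat\Psi.$$
   Context: $f^*(x^* )=\sup_{y\in\mathbb{R}^n}\langle x^*,y\rangle-f(y)$ is the Fenchel conjugate; for strongly convex finite $f$ it is finite and differentiable, and $\nabla f^*(d)\in\mathbb{R}^n$ satisfies $d\in\partial f(\nabla f^*(d))$. For $x^*\in\partial f(x)$, the Bregman distance is $D_f^{x^*}(x,y)=f(y)-f(x)-\langle x^*,y-x\rangle$. The minimum $\hat\Psi$ of the dual function $\Psi$ is attained and strong duality $\hat\Psi=-f(\hat x)$ holds. *)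

theory Defs
  imports "HOL-Analysis.Analysis"
begin

definition strongly_convex :: "('a::real_inner \<Rightarrow> real) \<Rightarrow> bool" where
  "strongly_convex f \<longleftrightarrow> (\<exists>mu>0. \<forall>x y. \<forall>t::real. 0 \<le> t \<and> t \<le> 1 \<longrightarrow>
      f ((1 - t) *\<^sub>R x + t *\<^sub>R y) \<le> (1 - t) * f x + t * f y - mu / 2 * t * (1 - t) * (norm (x - y))^2)"

definition fconj :: "('a::real_inner \<Rightarrow> real) \<Rightarrow> 'a \<Rightarrow> real" where
  "fconj f xs = (SUP y. xs \<bullet> y - f y)"

definition grad :: "('a::real_inner \<Rightarrow> real) \<Rightarrow> 'a \<Rightarrow> 'a" where
  "grad g d = (SOME x. (g has_derivative (\<lambda>h. x \<bullet> h)) (at d))"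

definition bregman :: "('a::real_inner \<Rightarrow> real) \<Rightarrow> 'a \<Rightarrow> 'a \<Rightarrow> 'a \<Rightarrow> real" where
  "bregman f xs x y = f y - f x - xs \<bullet> (y - x)"

end

theory Submission
  imports Defs
begin

locale sc =
  fixes f :: "'a::euclidean_space \<Rightarrow> real" and mu :: real
  assumes mu_pos: "mu > 0"
    and SC: "\<And>x y t. 0 \<le> t \<Longrightarrow> t \<le> 1 \<Longrightarrow>
      f ((1 - t) *\<^sub>R x + t *\<^sub>R y) \<le> (1 - t) * f x + t * f y - mu / 2 * t * (1 - t) * (norm (x - y))^2"
begin

lemma cvx: "convex_on UNIV f"
  unfolding convex_on_def
proof (intro conjI ballI allI impI)
  fix x y :: 'a and u v :: real
  assume h: "0 \<le> u" "0 \<le> v" "u + v = 1"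
  then have u: "u = 1 - v" by simp
  have "f (u *\<^sub>R x + v *\<^sub>R y) \<le> u * f x + v * f y - mu / 2 * v * (1 - v) * (norm (x - y))^2"
    using SC[of v x y] h u by simp
  also have "\<dots> \<le> u * f x + v * f y"
    using mu_pos h u by (simp add: mult_nonneg_nonneg)
  finally show "f (u *\<^sub>R x + v *\<^sub>R y) \<le> u * f x + v * f y" .
qed simp

lemma cont: "continuous_on UNIV f"
  using convex_on_continuous[OF open_UNIV cvx] .

lemma shift: "sc (\<lambda>y. f y - d \<bullet> y) mu"
proof
  show "mu > 0" by (rule mu_pos)
  fix x y :: 'a and t :: real
  assume "0 \<le> t" "t \<le> 1"
  then show "f ((1 - t) *\<^sub>R x + t *\<^sub>R y) - d \<bullet> ((1 - t) *\<^sub>R x + t *\<^sub>R y)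
    \<le> (1 - t) * (f x - d \<bullet> x) + t * (f y - d \<bullet> y) - mu / 2 * t * (1 - t) * (norm (x - y))\<^sup>2"
    using SC[of t x y] by (simp add: inner_add_right algebra_simps)
qed

lemma growth:
  assumes "\<forall>y. f x \<le> f y"
  shows "f x + mu / 4 * (norm (y - x))^2 \<le> f y"
proof -
  have "f ((1 - 1/2) *\<^sub>R x + (1/2) *\<^sub>R y) \<le> (1 - 1/2) * f x + (1/2) * f y - mu / 2 * (1/2) * (1 - 1/2) * (norm (x - y))^2"
    by (rule SC) auto
  moreover have "f x \<le> f ((1 - 1/2) *\<^sub>R x + (1/2) *\<^sub>R y)" using assms by blast
  moreover have "norm (x - y) = norm (y - x)" by (rule norm_minus_commute)
  ultimately show ?thesis by simp
qed

lemma exmin: "\<exists>x. \<forall>y. f x \<le> f y"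
proof -
  have "\<exists>p\<in>cball (0::'a) 1. \<forall>q\<in>cball 0 1. f p \<le> f q"
    by (rule continuous_attains_inf) (auto intro: continuous_on_subset[OF cont])
  then obtain p where p: "p \<in> cball 0 1" "\<forall>q\<in>cball 0 1. f p \<le> f q" by blast
  define S where "S = {y. f y \<le> f 0}"
  have clS: "closed S" unfolding S_def
    by (rule closed_Collect_le[OF cont]) simp
  have bd: "norm y \<le> 1 + 2 * (f 0 - f p) / mu" if "y \<in> S" for y
  proof (cases "norm y \<le> 1")
    case True
    have "f p \<le> f 0" using p by simp
    then have "0 \<le> 2 * (f 0 - f p) / mu" using mu_pos by simp
    then show ?thesis using True by linarith
  next
    case False
    define t where "t = 1 / norm y"
    have t01: "0 \<le> t" "t \<le> 1" using False unfolding t_def by (auto simp: divide_le_eq_1)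
    have "norm (t *\<^sub>R y) = 1" using False by (auto simp: t_def)
    then have fp: "f p \<le> f (t *\<^sub>R y)" using p by simp
    have "f (t *\<^sub>R y) \<le> (1 - t) * f 0 + t * f y - mu / 2 * (t * (1 - t) * (norm y)^2)"
      using SC[OF t01, of 0 y] by (simp add: mult.assoc)
    moreover have "(1 - t) * f 0 + t * f y \<le> f 0"
    proof -
      have "t * f y \<le> t * f 0" using that t01 unfolding S_def by (simp add: mult_left_mono)
      then show ?thesis by (simp add: algebra_simps)
    qed
    moreover have "t * (1 - t) * (norm y)^2 = norm y - 1"
    proof -
      have "y \<noteq> 0" using False by auto
      then have "norm y \<noteq> 0" by simp
      then show ?thesis by (simp add: t_def power2_eq_square field_simps)
    qed
    then have "mu / 2 * (t * (1 - t) * (norm y)^2) = mu / 2 * (norm y - 1)" by simp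
    ultimately have "f p \<le> f 0 - mu / 2 * (norm y - 1)" using fp
      by linarith
    then have "mu * (norm y - 1) \<le> 2 * (f 0 - f p)" by simp
    then show ?thesis using mu_pos by (simp add: field_simps)
  qed
  have "bounded S" unfolding bounded_iff using bd by blast
  then have "compact S" using clS by (simp add: compact_eq_bounded_closed)
  moreover have "S \<noteq> {}" unfolding S_def by auto
  ultimately obtain x where x: "x \<in> S" "\<forall>y\<in>S. f x \<le> f y"
    using continuous_attains_inf[of S f] cont continuous_on_subset by blast
  have "f x \<le> f y" for y
  proof (cases "y \<in> S")
    case False
    then have "f 0 < f y" unfolding S_def by simp
    moreover have "f x \<le> f 0" using x unfolding S_def by simp
    ultimately show ?thesis by simp
  qed (use x in auto)
  then show ?thesis by blast
qed

end

definition xm :: "('a::real_inner \<Rightarrow> real) \<Rightarrow> 'a \<Rightarrow> 'a" where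
  "xm f d = (SOME x. \<forall>y. f x - d \<bullet> x \<le> f y - d \<bullet> y)"

context sc
begin

lemma xm_min: "f (xm f d) - d \<bullet> xm f d \<le> f y - d \<bullet> y"
proof -
  interpret g: sc "\<lambda>y. f y - d \<bullet> y" mu by (rule shift)
  have "\<exists>x. \<forall>y. f x - d \<bullet> x \<le> f y - d \<bullet> y" using g.exmin .
  then have "\<forall>y. f (xm f d) - d \<bullet> xm f d \<le> f y - d \<bullet> y"
    unfolding xm_def by (rule someI_ex)
  then show ?thesis by blast
qed

lemma bdd: "bdd_above (range (\<lambda>y. d \<bullet> y - f y))"
proof (rule bdd_aboveI2[where M = "d \<bullet> xm f d - f (xm f d)"])
  fix x show "d \<bullet> x - f x \<le> d \<bullet> xm f d - f (xm f d)" using xm_min[of d x] by linarith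
qed

lemma fconj_eq: "fconj f d = d \<bullet> xm f d - f (xm f d)"
  unfolding fconj_def
proof (rule antisym)
  show "(SUP y. d \<bullet> y - f y) \<le> d \<bullet> xm f d - f (xm f d)"
  proof (rule cSUP_least)
    fix x show "d \<bullet> x - f x \<le> d \<bullet> xm f d - f (xm f d)" using xm_min[of d x] by linarith
  qed simp
  show "d \<bullet> xm f d - f (xm f d) \<le> (SUP y. d \<bullet> y - f y)"
    by (rule cSUP_upper[OF _ bdd]) simp
qed

lemma fconj_lower: "d \<bullet> x - f x \<le> fconj f d"
  unfolding fconj_def by (rule cSUP_upper[OF _ bdd]) simp

lemma fconj_upper: "fconj f (d + e) \<le> fconj f d + e \<bullet> xm f d + (norm e)^2 / mu"
proof -
  interpret g: sc "\<lambda>y. f y - d \<bullet> y" mu by (rule shift)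
  define x where "x = xm f d"
  have "(d + e) \<bullet> y - f y \<le> fconj f d + e \<bullet> x + (norm e)^2 / mu" for y
  proof -
    define r where "r = norm (y - x)"
    define ne where "ne = norm e"
    have gr: "f x - d \<bullet> x + mu / 4 * r^2 \<le> f y - d \<bullet> y"
      unfolding r_def x_def by (rule g.growth) (use xm_min[of d] in auto)
    have cs: "e \<bullet> (y - x) \<le> ne * r" unfolding ne_def r_def by (rule norm_cauchy_schwarz)
    have "0 \<le> (ne - mu * r / 2)^2" by simp
    then have "mu * (ne * r - mu / 4 * r^2) \<le> ne^2" by (simp add: power2_eq_square algebra_simps)
    then have q: "ne * r - mu / 4 * r^2 \<le> ne^2 / mu" using mu_pos by (simp add: field_simps)
    have "(d + e) \<bullet> y - f y = e \<bullet> (y - x) + e \<bullet> x - (f y - d \<bullet> y)" by (simp add: algebra_simps)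
    also have "\<dots> \<le> ne * r + e \<bullet> x - (f x - d \<bullet> x + mu / 4 * r^2)" using gr cs by linarith
    also have "\<dots> \<le> (d \<bullet> x - f x) + e \<bullet> x + ne^2 / mu" using q by linarith
    finally show ?thesis unfolding x_def fconj_eq ne_def .
  qed
  then show ?thesis unfolding fconj_def[of f "d + e"] x_def by (intro cSUP_least) auto
qed

lemma deriv: "(fconj f has_derivative (\<lambda>h. xm f d \<bullet> h)) (at d)"
  unfolding has_derivative_at_alt
proof (intro conjI allI impI)
  show "bounded_linear ((\<bullet>) (xm f d))" by (rule bounded_linear_inner_right)
  fix e :: real assume e: "e > 0"
  show "\<exists>del>0. \<forall>y. norm (y - d) < del \<longrightarrow>
      norm (fconj f y - fconj f d - xm f d \<bullet> (y - d)) \<le> e * norm (y - d)"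
  proof (intro exI[of _ "e * mu"] conjI allI impI)
    show "0 < e * mu" using e mu_pos by simp
    fix y assume y: "norm (y - d) < e * mu"
    define h where "h = y - d"
    have up: "fconj f (d + h) \<le> fconj f d + h \<bullet> xm f d + (norm h)^2 / mu" by (rule fconj_upper)
    have lo: "(d + h) \<bullet> xm f d - f (xm f d) \<le> fconj f (d + h)" by (rule fconj_lower)
    have "(norm h)^2 / mu \<le> e * norm h"
    proof -
      have "norm h * norm h \<le> (e * mu) * norm h" using y unfolding h_def
        by (intro mult_right_mono) auto
      then show ?thesis using mu_pos by (simp add: field_simps power2_eq_square)
    qed
    moreover have "(d + h) \<bullet> xm f d = d \<bullet> xm f d + xm f d \<bullet> h"
      by (simp add: inner_add_left inner_commute)
    moreover have "h \<bullet> xm f d = xm f d \<bullet> h" by (simp add: inner_commute)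
    moreover have "d + h = y" unfolding h_def by simp
    ultimately have "\<bar>fconj f y - fconj f d - xm f d \<bullet> h\<bar> \<le> e * norm h"
      using up lo unfolding fconj_eq[of d] by (simp add: abs_le_iff)
    then show "norm (fconj f y - fconj f d - xm f d \<bullet> (y - d)) \<le> e * norm (y - d)"
      unfolding h_def by simp
  qed
qed

lemma grad_eq: "grad (fconj f) d = xm f d"
  unfolding grad_def
proof (rule some_equality)
  show "(fconj f has_derivative (\<bullet>) (xm f d)) (at d)" by (rule deriv)
  fix x' assume "(fconj f has_derivative (\<bullet>) x') (at d)"
  then have "(\<bullet>) x' = (\<bullet>) (xm f d)" using deriv has_derivative_unique by blast
  then have "x' \<bullet> (x' - xm f d) = xm f d \<bullet> (x' - xm f d)" by metis
  then have "(x' - xm f d) \<bullet> (x' - xm f d) = 0" by (simp add: inner_diff_left)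
  then show "x' = xm f d" by simp
qed

end

theorem lemma1:
  fixes A :: "real^'n^'m" and b :: "real^'m" and f :: "real^'n \<Rightarrow> real"
    and xhat :: "real^'n" and y :: "nat \<Rightarrow> real^'m"
  assumes hb: "b \<in> range (\<lambda>x. A *v x)"
    and hf: "strongly_convex f"
    and hxhat: "A *v xhat = b" "\<forall>x. A *v x = b \<longrightarrow> f xhat \<le> f x"
  shows "\<forall>k. bregman f (transpose A *v y k) (grad (fconj f) (transpose A *v y k)) xhat
            = (fconj f (transpose A *v y k) - b \<bullet> y k)
              - (INF z. fconj f (transpose A *v z) - b \<bullet> z)"
proof -
  obtain mu where mu: "mu > 0" and SC0: "\<forall>x y. \<forall>t::real. 0 \<le> t \<and> t \<le> 1 \<longrightarrow>
      f ((1 - t) *\<^sub>R x + t *\<^sub>R y) \<le> (1 - t) * f x + t * f y - mu / 2 * t * (1 - t) * (norm (x - y))^2"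
    using hf unfolding strongly_convex_def by blast
  interpret sc f mu
    by unfold_locales (use mu SC0 in auto)
  have tr: "(transpose A *v z) \<bullet> x = z \<bullet> (A *v x)" for z x
    by (simp add: transpose_matrix_vector dot_lmul_matrix)
  define H where "H d = fconj f d - xhat \<bullet> d" for d
  define Psi where "Psi z = fconj f (transpose A *v z) - b \<bullet> z" for z
  have PsiH: "Psi z = H (transpose A *v z)" for z
  proof -
    have "b \<bullet> z = xhat \<bullet> (transpose A *v z)"
      using tr[of z xhat] hxhat(1) by (simp add: inner_commute)
    then show ?thesis unfolding Psi_def H_def by simp
  qed
  have weak: "- f xhat \<le> Psi z" for z
  proof -
    have "(transpose A *v z) \<bullet> xhat - f xhat \<le> fconj f (transpose A *v z)" by (rule fconj_lower)
    then show ?thesis unfolding Psi_def using tr[of z xhat] hxhat(1) by (simp add: inner_commute)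
  qed
  define W where "W = range (\<lambda>z. transpose A *v z)"
  have subW: "subspace W" unfolding W_def
    by (rule linear_subspace_image[OF matrix_vector_mul_linear subspace_UNIV])
  have contF: "continuous_on UNIV (fconj f)"
    by (rule continuous_at_imp_continuous_on) (use has_derivative_continuous[OF deriv] in blast)
  have contH: "continuous_on UNIV H" unfolding H_def
    by (intro continuous_intros contF)
  have "\<exists>q\<in>cball xhat 1. \<forall>u\<in>cball xhat 1. f u \<le> f q"
    by (rule continuous_attains_sup) (auto intro: continuous_on_subset[OF cont])
  then obtain q where q: "\<forall>u\<in>cball xhat 1. f u \<le> f q" by blast
  define M where "M = f q"
  have coer: "norm d - M \<le> H d" for d
  proof -
    define u where "u = xhat + sgn d"
    have "u \<in> cball xhat 1" unfolding u_def by (simp add: dist_norm norm_sgn)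
    then have fu: "f u \<le> M" using q M_def by blast
    have dsg: "d \<bullet> sgn d = norm d"
      by (cases "d = 0") (simp_all add: sgn_div_norm power2_norm_eq_inner[symmetric] power2_eq_square)
    have "d \<bullet> u - f u \<le> fconj f d" by (rule fconj_lower)
    moreover have "d \<bullet> u = d \<bullet> xhat + norm d" unfolding u_def by (simp add: inner_add_right dsg)
    ultimately show ?thesis unfolding H_def using fu by (simp add: inner_commute)
  qed
  define S where "S = W \<inter> {d. H d \<le> H 0}"
  have clS: "closed S" unfolding S_def
    by (intro closed_Int closed_subspace[OF subW] closed_Collect_le contH continuous_on_const)
  have "bounded S" unfolding bounded_iff S_def using coer
    by (metis (no_types, lifting) Int_iff add.commute diff_le_eq mem_Collect_eq order.trans)
  then have "compact S" using clS by (simp add: compact_eq_bounded_closed)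
  moreover have "0 \<in> S" unfolding S_def W_def
    by (auto intro: image_eqI[where x = 0])
  ultimately have "\<exists>ds\<in>S. \<forall>d\<in>S. H ds \<le> H d"
    using continuous_attains_inf[of S H] contH continuous_on_subset by blast
  then obtain ds where ds: "ds \<in> S" "\<forall>d\<in>S. H ds \<le> H d" by blast
  have dsW: "ds \<in> W" and dsmin: "\<forall>d\<in>W. H ds \<le> H d"
  proof -
    show "ds \<in> W" using ds S_def by blast
    show "\<forall>d\<in>W. H ds \<le> H d"
    proof
      fix d assume d: "d \<in> W"
      show "H ds \<le> H d"
      proof (cases "H d \<le> H 0")
        case True then show ?thesis using ds d S_def by blast
      next
        case False
        have "H ds \<le> H 0" using ds S_def by blast
        then show ?thesis using False by linarith
      qed
    qed
  qed
  obtain zs where zs: "ds = transpose A *v zs" using dsW W_def by blast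
  define xs where "xs = xm f ds"
  define r where "r = A *v xs - b"
  have r0: "r = 0"
  proof (rule ccontr)
    assume rne: "r \<noteq> 0"
    define v where "v = transpose A *v r"
    define a where "a = r \<bullet> r"
    define B where "B = (norm v)^2 / mu"
    have apos: "a > 0" using rne unfolding a_def by simp
    have B0: "B \<ge> 0" unfolding B_def using mu by simp
    define t where "t = a / (B + 1)"
    have tpos: "t > 0" using apos B0 unfolding t_def by simp
    define e where "e = - (t *\<^sub>R v)"
    have "v \<in> W" unfolding v_def W_def by simp
    then have "ds + e \<in> W" unfolding e_def using subW dsW
      by (metis diff_conv_add_uminus subspace_diff subspace_scale)
    then have "H ds \<le> H (ds + e)" using dsmin by blast
    also have "H (ds + e) \<le> H ds + e \<bullet> (xs - xhat) + (norm e)^2 / mu"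
      using fconj_upper[of ds e] unfolding H_def xs_def by (simp add: inner_add_right inner_diff_right inner_commute)
    also have "e \<bullet> (xs - xhat) = - t * a"
    proof -
      have "v \<bullet> (xs - xhat) = r \<bullet> (A *v (xs - xhat))" unfolding v_def by (rule tr)
      also have "\<dots> = a" unfolding a_def r_def using hxhat(1) by (simp add: matrix_vector_mult_diff_distrib)
      finally show ?thesis unfolding e_def by simp
    qed
    also have "(norm e)^2 / mu = t * (t * B)"
      unfolding e_def B_def using tpos by (simp add: power2_eq_square)
    finally have "t * a \<le> t * (t * B)" by simp
    then have "a \<le> t * B" using tpos by simp
    moreover have "t * B < a"
    proof -
      have "t * B = a * (B / (B + 1))" unfolding t_def by simp
      also have "\<dots> < a * 1" using apos B0 by (intro mult_strict_left_mono) auto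
      finally show ?thesis by simp
    qed
    ultimately show False by simp
  qed
  have feas: "A *v xs = b" using r0 unfolding r_def by simp
  have "Psi zs = - f xs"
  proof -
    have "Psi zs = H ds" using PsiH zs by simp
    also have "\<dots> = ds \<bullet> xs - f xs - xhat \<bullet> ds" unfolding H_def xs_def by (simp add: fconj_eq)
    also have "ds \<bullet> xs = zs \<bullet> b" using tr[of zs xs] feas zs by simp
    also have "xhat \<bullet> ds = zs \<bullet> b" using tr[of zs xhat] hxhat(1) zs by (simp add: inner_commute)
    finally show ?thesis by simp
  qed
  then have Pzs: "Psi zs \<le> - f xhat" using hxhat(2) feas by simp
  have INFeq: "(INF z. Psi z) = - f xhat"
  proof (rule antisym)
    have "(INF z. Psi z) \<le> Psi zs" by (rule cINF_lower) (auto intro: bdd_belowI2 weak)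
    then show "(INF z. Psi z) \<le> - f xhat" using Pzs by simp
    show "- f xhat \<le> (INF z. Psi z)" by (rule cINF_greatest) (auto intro: weak)
  qed
  show ?thesis
  proof
    fix k
    define d where "d = transpose A *v y k"
    have g: "grad (fconj f) d = xm f d" by (rule grad_eq)
    have dx: "d \<bullet> xhat = y k \<bullet> b" unfolding d_def using tr[of "y k" xhat] hxhat(1) by simp
    have "(INF z. fconj f (transpose A *v z) - b \<bullet> z) = - f xhat"
      using INFeq unfolding Psi_def .
    then show "bregman f d (grad (fconj f) d) xhat = fconj f d - b \<bullet> y k
        - (INF z. fconj f (transpose A *v z) - b \<bullet> z)"
      unfolding bregman_def g fconj_eq using dx
      by (simp add: inner_diff_right inner_commute)
  qed
qed

end
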